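(* Let $d\geq 3$ and $n\geq 1$ be integers, let $1\leq l\leq n$, let $v_1,\dots,v_l\in\mathbb R^n$ be orthonormal, and let $\lambda_1,\dots,\lambda_l\in\mathbb R$ be nonzero. Let $T=\sum_{i=1}^l\lambda_i v_i^{\otimes d}\in S^d(\mathbb R^n)$, i.e. $f_T(x)=\sum_{i=1}^l\lambda_i(v_i\cdot x)^d$. Let $V\in\mathbb R^{l\times n}$ be the matrix with rows $v_1,\dots,v_l$, and fix for each $i$ a $(d-2)$-nd root $\lambda_i^{1/(d-2)}\in\mathbb C$ of $\lambda_i$ (write $\lambda_i^{-1/(d-2)}$ for its inverse). For every $k\in\{1,\dots,l\}$, every subset $\mathcal I=\{i_1<i_2<\dots<i_k\}\subseteq\{1,\dots,l\}$ and every $(k-1)$-tuple $(\eta_1,\dots,\eta_{k-1})$ of $(d-2)$-nd roots of unity, define $y\in\mathbb C^l$ by $$y_i=\begin{cases}\eta_j\lambda_{i_j}^{-1/(d-2)} & \text{if } i=i_j,\ j\in\{1,\dots,k-1\},\\ \lambda_{i_k}^{-1/(d-2)} & \text{if } i=i_k,\\ 0 & \text{if } i\notin\mathcal I,\end{cases}$$ and $w=V^Ty\in\mathbb C^n$. Then each such $w$ is an eigenvector of $T$; these vectors $w$ are, up to scaling, $\frac{(d-1)^l-1}{d-2}$ distinct eigenvectors of $T$ in $\mathbb C^n$; and every eigenvector of $T$ is, up to scaling, either one of these vectors $w$ or a nonzero element of the nullspace of $V$ (and every nonzero element of the nullspace of $V$ is an eigenvector of $T$).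
   Context: $S^d(\mathbb R^n)$ (resp. $S^d(\mathbb C^n)$) denotes the space of real (resp. complex) symmetric tensors of order $d$ and dimension $n$, i.e. arrays $(T_{i_1\dots i_d})_{i_j\in\{1,\dots,n\}}$ invariant under permutation of indices. The associated polynomial is $f_T(x)=\sum_{i_1,\dots,i_d}T_{i_1\dots i_d}x_{i_1}\cdots x_{i_d}$. A nonzero vector $w\in\mathbb C^n$ is an eigenvector of $T$ if there is $\lambda\in\mathbb C$ with $Tw^{d-1}=\lambda w$, where $(Tw^{d-1})_i=\sum_{i_2,\dots,i_d}T_{i,i_2,\dots,i_d}w_{i_2}\cdots w_{i_d}$; equivalently $\nabla f_T(w)$ and $w$ are parallel. Eigenvectors are counted up to nonzero scaling. *)

theory Defs
  imports "HOL-Analysis.Analysis"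
begin

text \<open>Vectors of C^n / R^n are indexed by a finite type 'n (n = CARD('n)).
  A (complex) tensor of order d is a function from index lists of length d to complex
  numbers; only lists of length d matter.\<close>

definition cvec :: "real^'n \<Rightarrow> complex^'n" where
  "cvec x = (\<chi> j. complex_of_real (x $ j))"

definition tensor_apply :: "nat \<Rightarrow> ('n::finite list \<Rightarrow> complex) \<Rightarrow> complex^'n \<Rightarrow> complex^'n" where
  "tensor_apply d T w =
     (\<chi> i. \<Sum>is\<in>{xs. length xs = d - 1}. T (i # is) * (\<Prod>j\<leftarrow>is. w $ j))"

definition is_eigenvector :: "nat \<Rightarrow> ('n::finite list \<Rightarrow> complex) \<Rightarrow> complex^'n \<Rightarrow> bool" where
  "is_eigenvector d T w \<longleftrightarrow> w \<noteq> 0 \<and> (\<exists>\<mu>. tensor_apply d T w = \<mu> *s w)"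

text \<open>T = sum_{i<l} lam_i v_i^{\<otimes> d} (indices 0..l-1), as a real array\<close>
definition odeco_tensor :: "nat \<Rightarrow> (nat \<Rightarrow> real) \<Rightarrow> (nat \<Rightarrow> real^'n) \<Rightarrow> 'n list \<Rightarrow> real" where
  "odeco_tensor l lam v xs = (\<Sum>i<l. lam i * (\<Prod>j\<leftarrow>xs. v i $ j))"

definition VT_mult :: "nat \<Rightarrow> (nat \<Rightarrow> real^'n) \<Rightarrow> (nat \<Rightarrow> complex) \<Rightarrow> complex^'n" where
  "VT_mult l v y = (\<Sum>i<l. y i *s cvec (v i))"

definition in_nullspace_V :: "nat \<Rightarrow> (nat \<Rightarrow> real^'n) \<Rightarrow> complex^'n \<Rightarrow> bool" where
  "in_nullspace_V l v w \<longleftrightarrow> (\<forall>i<l. (\<Sum>j\<in>UNIV. complex_of_real (v i $ j) * w $ j) = 0)"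

text \<open>The vector y for subset I = {i_1 < ... < i_k} and tuple eta_1..eta_{k-1};
  r i is the chosen (d-2)-nd root of lam i, and 1 / r i its inverse.
  With s = sorted list of I, i_j = s ! (j-1).\<close>
definition y_vec :: "(nat \<Rightarrow> complex) \<Rightarrow> nat set \<Rightarrow> (nat \<Rightarrow> complex) \<Rightarrow> nat \<Rightarrow> complex" where
  "y_vec r I eta i =
     (let s = sorted_list_of_set I; k = card I in
       (\<Sum>j\<in>{1..k-1}. if i = s ! (j - 1) then eta j / r i else 0)
       + (if i = s ! (k - 1) then 1 / r i else 0))"

definition candidate_eigvecs :: "nat \<Rightarrow> nat \<Rightarrow> (nat \<Rightarrow> real^'n) \<Rightarrow> (nat \<Rightarrow> complex) \<Rightarrow> (complex^'n) set" where
  "candidate_eigvecs d l v r =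
     {VT_mult l v (y_vec r I eta) | I eta.
        I \<subseteq> {..<l} \<and> I \<noteq> {} \<and> (\<forall>j\<in>{1..card I - 1}. eta j ^ (d - 2) = 1)}"

definition proj_class :: "complex^'n \<Rightarrow> (complex^'n) set" where
  "proj_class w = {c *s w | c. c \<noteq> 0}"

end

theory Submission
  imports Defs
begin

lemma lists_UNIV_Suc:
  "{xs::'a list. length xs = Suc m} = (\<lambda>(x,xs). x#xs) ` (UNIV \<times> {xs. length xs = m})"
  by (auto simp: length_Suc_conv)

lemma sum_lists_prod:
  fixes f :: "'n::finite \<Rightarrow> 'a::comm_semiring_1"
  shows "(\<Sum>xs\<in>{xs::'n list. length xs = m}. \<Prod>j\<leftarrow>xs. f j) = (\<Sum>j\<in>UNIV. f j) ^ m"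
proof (induction m)
  case 0
  then show ?case by simp
next
  case (Suc m)
  have inj: "inj_on (\<lambda>(x,xs). x#xs) (UNIV \<times> {xs::'n list. length xs = m})"
    by (auto simp: inj_on_def)
  have "(\<Sum>xs\<in>{xs::'n list. length xs = Suc m}. \<Prod>j\<leftarrow>xs. f j)
      = (\<Sum>p\<in>UNIV \<times> {xs::'n list. length xs = m}. f (fst p) * (\<Prod>j\<leftarrow>snd p. f j))"
    unfolding lists_UNIV_Suc by (subst sum.reindex[OF inj]) (auto intro!: sum.cong)
  also have "\<dots> = (\<Sum>x\<in>UNIV. \<Sum>xs\<in>{xs::'n list. length xs = m}. f x * (\<Prod>j\<leftarrow>xs. f j))"
    unfolding sum.cartesian_product by (simp add: case_prod_beta)
  also have "\<dots> = (\<Sum>j\<in>UNIV. f j) * (\<Sum>xs\<in>{xs::'n list. length xs = m}. \<Prod>j\<leftarrow>xs. f j)"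
    by (simp add: sum_distrib_left sum_distrib_right) (rule sum.swap)
  finally show ?case using Suc by simp
qed

lemma of_real_prod_list_map: "complex_of_real (\<Prod>j\<leftarrow>xs. g j) = (\<Prod>j\<leftarrow>xs. complex_of_real (g j))"
  by (induction xs) auto

lemma prod_list_map_mult: "(\<Prod>j\<leftarrow>xs. (f j::'a::comm_monoid_mult)) * (\<Prod>j\<leftarrow>xs. g j) = (\<Prod>j\<leftarrow>xs. f j * g j)"
  by (induction xs) (auto simp: algebra_simps)

definition dotc :: "real^'n \<Rightarrow> complex^'n \<Rightarrow> complex" where
  "dotc u w = (\<Sum>j\<in>UNIV. complex_of_real (u $ j) * w $ j)"

lemma tensor_apply_odeco:
  assumes "d \<ge> 1"
  shows "tensor_apply d (\<lambda>xs. complex_of_real (odeco_tensor l lam v xs)) w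
       = (\<Sum>k<l. (complex_of_real (lam k) * dotc (v k) w ^ (d - 1)) *s cvec (v k))"
proof -
  have "(tensor_apply d (\<lambda>xs. complex_of_real (odeco_tensor l lam v xs)) w) $ i
       = (\<Sum>k<l. (complex_of_real (lam k) * dotc (v k) w ^ (d - 1)) *s cvec (v k)) $ i" for i
  proof -
    have "(tensor_apply d (\<lambda>xs. complex_of_real (odeco_tensor l lam v xs)) w) $ i
      = (\<Sum>is\<in>{xs. length xs = d - 1}. \<Sum>k<l. complex_of_real (lam k) * complex_of_real (v k $ i) *
           (\<Prod>j\<leftarrow>is. complex_of_real (v k $ j) * w $ j))"
      unfolding tensor_apply_def odeco_tensor_def
      by (auto simp: sum_distrib_right of_real_prod_list_map prod_list_map_mult[symmetric] mult.assoc intro!: sum.cong)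
    also have "\<dots> = (\<Sum>k<l. complex_of_real (lam k) * complex_of_real (v k $ i) *
           (\<Sum>is\<in>{xs. length xs = d - 1}. \<Prod>j\<leftarrow>is. complex_of_real (v k $ j) * w $ j))"
      by (subst sum.swap) (simp add: sum_distrib_left)
    also have "\<dots> = (\<Sum>k<l. (complex_of_real (lam k) * dotc (v k) w ^ (d - 1)) *s cvec (v k)) $ i"
      by (simp add: sum_lists_prod dotc_def cvec_def sum_component mult_ac)
    finally show ?thesis .
  qed
  then show ?thesis by (simp add: vec_eq_iff)
qed

lemma dotc_cvec: "dotc u (cvec x) = complex_of_real (u \<bullet> x)"
  by (simp add: dotc_def cvec_def inner_vec_def)

lemma dotc_scale: "dotc u (a *s x) = a * dotc u x"
  by (simp add: dotc_def sum_distrib_left mult_ac)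

lemma dotc_sum: "dotc u (\<Sum>i\<in>A. f i) = (\<Sum>i\<in>A. dotc u (f i))"
  by (induction A rule: infinite_finite_induct) (auto simp: dotc_def sum.distrib algebra_simps sum_component)

lemma dotc_zero[simp]: "dotc u 0 = 0"
  by (simp add: dotc_def)

lemma dotc_comb:
  fixes l :: nat
  assumes orth: "\<forall>i<l. \<forall>j<l. v i \<bullet> v j = (if i = j then 1 else 0)" and k: "k < l"
  shows "dotc (v k) (\<Sum>i<l. c i *s cvec (v i)) = c k"
proof -
  have "dotc (v k) (\<Sum>i<l. c i *s cvec (v i)) = (\<Sum>i<l. c i * (if k = i then 1 else 0))"
    using orth k by (auto simp: dotc_sum dotc_scale dotc_cvec intro!: sum.cong)
  also have "\<dots> = c k" using k by (simp add: if_distrib cong: if_cong)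
  finally show ?thesis .
qed

lemma comb_zero:
  fixes l :: nat
  assumes orth: "\<forall>i<l. \<forall>j<l. v i \<bullet> v j = (if i = j then 1 else 0)"
    and "(\<Sum>i<l. c i *s cvec (v i)) = (\<Sum>i<l. c' i *s cvec (v i))" and "k < l"
  shows "c k = c' k"
  using dotc_comb[OF orth, of k c] dotc_comb[OF orth, of k c'] assms by simp

lemma nullspace_iff: "in_nullspace_V l v w \<longleftrightarrow> (\<forall>i<l. dotc (v i) w = 0)"
  by (simp add: in_nullspace_V_def dotc_def)

lemma y_vec_in:
  assumes fin: "finite I" and p: "p < card I"
  shows "y_vec r I eta (sorted_list_of_set I ! p)
       = (if p < card I - 1 then eta (p+1) else 1) / r (sorted_list_of_set I ! p)"
proof -
  define s where "s = sorted_list_of_set I"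
  define k where "k = card I"
  have len: "length s = k" and dist: "distinct s"
    using fin by (auto simp: s_def k_def)
  have eq: "s ! p = s ! q \<longleftrightarrow> p = q" if "q < k" for q
    using nth_eq_iff_index_eq[OF dist] p that len k_def by auto
  have "(\<Sum>j\<in>{1..k-1}. if s ! p = s ! (j - 1) then eta j / r (s!p) else 0)
      = (\<Sum>j\<in>{1..k-1}. if j = p + 1 then eta j / r (s!p) else 0)"
    by (rule sum.cong) (auto simp: eq)
  also have "\<dots> = (if p < k - 1 then eta (p+1) / r (s!p) else 0)"
    by (subst sum.delta) auto
  finally have A: "(\<Sum>j\<in>{1..k-1}. if s ! p = s ! (j - 1) then eta j / r (s!p) else 0)
      = (if p < k - 1 then eta (p+1) / r (s!p) else 0)" .
  have B: "s ! p = s ! (k - 1) \<longleftrightarrow> p = k - 1"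
    using eq[of "k-1"] p k_def by auto
  show ?thesis
    unfolding y_vec_def Let_def s_def[symmetric] k_def[symmetric] A using B p k_def by auto
qed

lemma y_vec_out:
  assumes fin: "finite I" and ne: "I \<noteq> {}" and i: "i \<notin> I"
  shows "y_vec r I eta i = 0"
proof -
  have mem: "sorted_list_of_set I ! q \<in> I" if "q < card I" for q
    using that fin by (metis length_sorted_list_of_set nth_mem set_sorted_list_of_set)
  have pos: "card I > 0" using fin ne by (simp add: card_gt_0_iff)
  have A: "i \<noteq> sorted_list_of_set I ! (j - 1)" if "j \<in> {1..card I - 1}" for j
  proof -
    have "j - 1 < card I" using that pos by auto
    then show ?thesis using mem[of "j-1"] i by auto
  qed
  have B: "i \<noteq> sorted_list_of_set I ! (card I - 1)"
    using mem[of "card I - 1"] i pos by auto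
  show ?thesis unfolding y_vec_def Let_def using A B by (simp add: sum.neutral)
qed

lemma r_nz:
  assumes d: "d \<ge> 3" and lam_nz: "lam i \<noteq> 0" and root: "r i ^ (d - 2) = complex_of_real (lam i)"
  shows "r i \<noteq> 0"
  using assms by (cases "d - 2") auto

lemma y_vec_mem:
  assumes fin: "finite I" and i: "i \<in> I"
  obtains p where "p < card I" "i = sorted_list_of_set I ! p"
    "y_vec r I eta i = (if p < card I - 1 then eta (p+1) else 1) / r i"
proof -
  obtain p where "p < length (sorted_list_of_set I)" "sorted_list_of_set I ! p = i"
    using i fin by (metis in_set_conv_nth set_sorted_list_of_set)
  then show ?thesis using that y_vec_in[OF fin, of p r eta] fin by auto
qed

lemma y_vec_fix:
  fixes l :: nat
  assumes d: "d \<ge> 3"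
    and lam_nz: "\<forall>i<l. lam i \<noteq> 0"
    and roots: "\<forall>i<l. r i ^ (d - 2) = complex_of_real (lam i)"
    and I: "I \<subseteq> {..<l}" "I \<noteq> {}" and eta: "\<forall>j\<in>{1..card I - 1}. eta j ^ (d - 2) = 1"
    and i: "i < l"
  shows "complex_of_real (lam i) * y_vec r I eta i ^ (d - 1) = y_vec r I eta i"
proof -
  have fin: "finite I" using I finite_subset by blast
  show ?thesis
  proof (cases "i \<in> I")
    case False
    then show ?thesis using y_vec_out[OF fin I(2) False] d by simp
  next
    case True
    obtain p where p: "p < card I" and y: "y_vec r I eta i = (if p < card I - 1 then eta (p+1) else 1) / r i"
      using y_vec_mem[OF fin True] by blast
    define e where "e = (if p < card I - 1 then eta (p+1) else 1)"
    have e: "e ^ (d - 2) = 1" using eta p unfolding e_def by auto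
    have rnz: "r i \<noteq> 0" using r_nz[of d lam i r] d lam_nz roots i by auto
    have dd: "d - 1 = Suc (d - 2)" using d by simp
    have "complex_of_real (lam i) * (e / r i) ^ (d - 1) = (e / r i) * (e ^ (d-2) * (r i ^ (d - 2) / r i ^ (d - 2)))"
      using roots i unfolding dd by (simp add: power_divide field_simps)
    also have "\<dots> = e / r i" using e rnz by simp
    finally show ?thesis using y e_def by simp
  qed
qed

lemma y_vec_last:
  assumes fin: "finite I" and ne: "I \<noteq> {}"
  shows "sorted_list_of_set I ! (card I - 1) \<in> I"
    "y_vec r I eta (sorted_list_of_set I ! (card I - 1)) = 1 / r (sorted_list_of_set I ! (card I - 1))"
proof -
  have pos: "card I > 0" using fin ne by (simp add: card_gt_0_iff)
  show "sorted_list_of_set I ! (card I - 1) \<in> I"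
    using pos fin by (metis diff_less length_sorted_list_of_set nth_mem set_sorted_list_of_set zero_less_one)
  show "y_vec r I eta (sorted_list_of_set I ! (card I - 1)) = 1 / r (sorted_list_of_set I ! (card I - 1))"
    using y_vec_in[OF fin, of "card I - 1" r eta] pos by simp
qed

lemma part1:
  fixes l :: nat
  assumes d: "d \<ge> 3"
    and orth: "\<forall>i<l. \<forall>j<l. v i \<bullet> v j = (if i = j then 1 else 0)"
    and lam_nz: "\<forall>i<l. lam i \<noteq> 0"
    and roots: "\<forall>i<l. r i ^ (d - 2) = complex_of_real (lam i)"
    and w: "w \<in> candidate_eigvecs d l v r"
  shows "is_eigenvector d (\<lambda>xs. complex_of_real (odeco_tensor l lam v xs)) w"
proof -
  obtain I eta where w: "w = VT_mult l v (y_vec r I eta)" and I: "I \<subseteq> {..<l}" "I \<noteq> {}"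
    and eta: "\<forall>j\<in>{1..card I - 1}. eta j ^ (d - 2) = 1"
    using w unfolding candidate_eigvecs_def by blast
  have fin: "finite I" using I finite_subset by blast
  let ?y = "y_vec r I eta"
  have dot: "dotc (v k) w = ?y k" if "k < l" for k
    using dotc_comb[OF orth that] w unfolding VT_mult_def by simp
  have "tensor_apply d (\<lambda>xs. complex_of_real (odeco_tensor l lam v xs)) w
      = (\<Sum>k<l. (complex_of_real (lam k) * ?y k ^ (d - 1)) *s cvec (v k))"
    using d by (simp add: tensor_apply_odeco dot)
  also have "\<dots> = w"
    unfolding w VT_mult_def using y_vec_fix[OF d lam_nz roots I eta] by simp
  finally have ev: "tensor_apply d (\<lambda>xs. complex_of_real (odeco_tensor l lam v xs)) w = 1 *s w" by simp
  define m where "m = sorted_list_of_set I ! (card I - 1)"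
  have m: "m < l" "?y m = 1 / r m" using y_vec_last(1)[OF fin I(2)] y_vec_last(2)[OF fin I(2), of r eta] I unfolding m_def by auto
  have "r m \<noteq> 0" using r_nz[of d lam m r] d lam_nz roots m by auto
  then have "dotc (v m) w \<noteq> 0" using dot m by simp
  then have "w \<noteq> 0" by auto
  then show ?thesis unfolding is_eigenvector_def using ev by blast
qed

lemma part4:
  fixes l :: nat
  assumes d: "d \<ge> 3" and w: "w \<noteq> 0" "in_nullspace_V l v w"
  shows "is_eigenvector d (\<lambda>xs. complex_of_real (odeco_tensor l lam v xs)) w"
proof -
  have "tensor_apply d (\<lambda>xs. complex_of_real (odeco_tensor l lam v xs)) w = 0 *s w"
    using d w by (simp add: tensor_apply_odeco nullspace_iff power_0_left)
  then show ?thesis using w unfolding is_eigenvector_def by blast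
qed

lemma part3:
  fixes l :: nat
  assumes d: "d \<ge> 3"
    and orth: "\<forall>i<l. \<forall>j<l. v i \<bullet> v j = (if i = j then 1 else 0)"
    and lam_nz: "\<forall>i<l. lam i \<noteq> 0"
    and roots: "\<forall>i<l. r i ^ (d - 2) = complex_of_real (lam i)"
    and ev: "is_eigenvector d (\<lambda>xs. complex_of_real (odeco_tensor l lam v xs)) w"
  shows "(\<exists>w0\<in>candidate_eigvecs d l v r. w \<in> proj_class w0) \<or> (w \<noteq> 0 \<and> in_nullspace_V l v w)"
proof (cases "in_nullspace_V l v w")
  case True
  then show ?thesis using ev unfolding is_eigenvector_def by blast
next
  case False
  define y where "y k = dotc (v k) w" for k
  obtain k0 where k0: "k0 < l" "y k0 \<noteq> 0" using False unfolding nullspace_iff y_def by blast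
  obtain mu where mu: "tensor_apply d (\<lambda>xs. complex_of_real (odeco_tensor l lam v xs)) w = mu *s w"
    using ev unfolding is_eigenvector_def by blast
  have eq0: "(\<Sum>k<l. (complex_of_real (lam k) * y k ^ (d - 1)) *s cvec (v k)) = mu *s w"
    using mu d by (simp add: tensor_apply_odeco y_def)
  have eq: "complex_of_real (lam k) * y k ^ (d - 1) = mu * y k" if "k < l" for k
    using dotc_comb[OF orth that, of "\<lambda>k. complex_of_real (lam k) * y k ^ (d - 1)"] eq0
    by (simp add: dotc_scale y_def)
  have dd: "d - 1 = Suc (d - 2)" using d by simp
  have eq2: "complex_of_real (lam k) * y k ^ (d - 2) = mu" if "k < l" "y k \<noteq> 0" for k
    using eq[OF that(1)] that(2) unfolding dd by (simp add: field_simps)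
  have munz: "mu \<noteq> 0" using eq2[OF k0] k0 lam_nz by auto
  have yfix: "(complex_of_real (lam k) * y k ^ (d - 1)) / mu = y k" if "k < l" for k
    using eq[OF that] munz by simp
  have wy: "w = (\<Sum>k<l. y k *s cvec (v k))"
  proof -
    have "w = (1/mu) *s (mu *s w)" using munz by simp
    also have "\<dots> = (\<Sum>k<l. ((complex_of_real (lam k) * y k ^ (d - 1)) / mu) *s cvec (v k))"
      unfolding eq0[symmetric] by (simp add: scaleR_sum_right vector_smult_assoc sum_distrib_left vec_eq_iff sum_component)
    also have "\<dots> = (\<Sum>k<l. y k *s cvec (v k))" using yfix by simp
    finally show ?thesis .
  qed
  define I where "I = {k. k < l \<and> y k \<noteq> 0}"
  have I: "I \<subseteq> {..<l}" "I \<noteq> {}" "finite I" using k0 unfolding I_def by auto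
  define s where "s = sorted_list_of_set I"
  define m where "m = s ! (card I - 1)"
  have mI: "m \<in> I" using y_vec_last(1)[OF I(3) I(2)] unfolding m_def s_def .
  have rnz: "r k \<noteq> 0" if "k < l" for k using r_nz[of d lam k r] d lam_nz roots that by auto
  define c where "c = y m * r m"
  have cI: "(y k * r k) ^ (d - 2) = mu" if "k \<in> I" for k
    using that eq2[of k] roots unfolding I_def by (auto simp: power_mult_distrib mult_ac)
  have cnz: "c \<noteq> 0" using mI rnz unfolding c_def I_def by auto
  define eta where "eta j = y (s ! (j - 1)) * r (s ! (j - 1)) / c" for j
  have sI: "s ! q \<in> I" if "q < card I" for q
    using that I(3) unfolding s_def by (metis length_sorted_list_of_set nth_mem set_sorted_list_of_set)
  have eta: "\<forall>j\<in>{1..card I - 1}. eta j ^ (d - 2) = 1"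
  proof
    fix j assume j: "j \<in> {1..card I - 1}"
    then have "j - 1 < card I" by auto
    then have "s ! (j - 1) \<in> I" by (rule sI)
    then show "eta j ^ (d - 2) = 1"
      unfolding eta_def power_divide using cI[OF mI] cI munz unfolding c_def by simp
  qed
  have yc: "y k = c * y_vec r I eta k" if "k < l" for k
  proof (cases "k \<in> I")
    case False
    then show ?thesis using y_vec_out[OF I(3) I(2) False] that unfolding I_def by auto
  next
    case True
    obtain p where p: "p < card I" "k = s ! p"
      and yv: "y_vec r I eta k = (if p < card I - 1 then eta (p+1) else 1) / r k"
      using y_vec_mem[OF I(3) True] unfolding s_def by blast
    show ?thesis
    proof (cases "p < card I - 1")
      case True
      then show ?thesis using yv p cnz rnz[OF that] unfolding eta_def by simp
    next
      case False
      then have "k = m" using p unfolding m_def by (metis Suc_pred' less_Suc_eq less_nat_zero_code not_less_eq)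
      then show ?thesis using yv False rnz[OF that] unfolding c_def by simp
    qed
  qed
  have w0: "VT_mult l v (y_vec r I eta) \<in> candidate_eigvecs d l v r"
    unfolding candidate_eigvecs_def using I eta by blast
  have "w = c *s VT_mult l v (y_vec r I eta)"
    unfolding wy VT_mult_def using yc
    by (simp add: scaleR_sum_right vector_smult_assoc sum_distrib_left vec_eq_iff sum_component mult_ac)
  then have "w \<in> proj_class (VT_mult l v (y_vec r I eta))"
    unfolding proj_class_def using cnz by blast
  then show ?thesis using w0 by blast
qed

lemma y_vec_nz:
  fixes l :: nat
  assumes d: "d \<ge> 3"
    and lam_nz: "\<forall>i<l. lam i \<noteq> 0"
    and roots: "\<forall>i<l. r i ^ (d - 2) = complex_of_real (lam i)"
    and I: "I \<subseteq> {..<l}" "I \<noteq> {}" and eta: "\<forall>j\<in>{1..card I - 1}. eta j ^ (d - 2) = 1"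
    and k: "k < l"
  shows "y_vec r I eta k \<noteq> 0 \<longleftrightarrow> k \<in> I"
proof -
  have fin: "finite I" using I finite_subset by blast
  show ?thesis
  proof (cases "k \<in> I")
    case False
    then show ?thesis using y_vec_out[OF fin I(2) False] by simp
  next
    case True
    obtain p where p: "p < card I" and y: "y_vec r I eta k = (if p < card I - 1 then eta (p+1) else 1) / r k"
      using y_vec_mem[OF fin True] by blast
    have "(if p < card I - 1 then eta (p+1) else 1) \<noteq> 0"
    proof (cases "p < card I - 1")
      case True
      then have "eta (p+1) ^ (d - 2) = 1" using eta by auto
      then show ?thesis using True d by (auto simp: power_0_left)
    qed simp
    moreover have "r k \<noteq> 0" using r_nz[of d lam k r] d lam_nz roots k by auto
    ultimately show ?thesis using y True by simp
  qed
qed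

lemma y_vec_restrict:
  "y_vec r I (restrict eta {1..card I - 1}) = y_vec r I eta"
  unfolding y_vec_def Let_def by (auto intro!: sum.cong ext)

lemma scale_VT: "c *s VT_mult l v y = VT_mult l v (\<lambda>i. c * y i)"
  unfolding VT_mult_def
  by (simp add: vector_smult_assoc sum_distrib_left vec_eq_iff sum_component mult_ac)

lemma sum_pow_card_Pow:
  fixes a :: nat
  assumes "finite A"
  shows "(\<Sum>X\<in>Pow A. a ^ card X) = (a + 1) ^ card A"
  using prod_add[OF assms, of "\<lambda>_. a" "\<lambda>_. 1"] by simp

lemma count_subsets:
  fixes a l :: nat
  assumes "a \<ge> 1"
  shows "a * (\<Sum>I\<in>{I. I \<subseteq> {..<l} \<and> I \<noteq> {}}. a ^ (card I - 1)) = (a + 1) ^ l - 1"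
proof -
  have S: "{I. I \<subseteq> {..<l} \<and> I \<noteq> {}} = Pow {..<l} - {{}}" by auto
  have "a * (\<Sum>I\<in>Pow {..<l} - {{}}. a ^ (card I - 1)) = (\<Sum>I\<in>Pow {..<l} - {{}}. a ^ card I)"
    unfolding sum_distrib_left
  proof (rule sum.cong)
    fix I assume "I \<in> Pow {..<l} - {{}}"
    then have "card I \<ge> 1" using finite_subset[of I "{..<l}"] by (auto simp: Suc_le_eq card_gt_0_iff)
    then show "a * a ^ (card I - 1) = a ^ card I" by (metis Suc_diff_le diff_Suc_1 power_Suc)
  qed simp
  also have "\<dots> = (\<Sum>I\<in>Pow {..<l}. a ^ card I) - 1"
    by (subst sum.remove[of "Pow {..<l}" "{}"]) auto
  also have "\<dots> = (a + 1) ^ l - 1" using sum_pow_card_Pow[of "{..<l}" a] by simp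
  finally show ?thesis unfolding S .
qed

lemma part2:
  fixes l :: nat
  assumes d: "d \<ge> 3"
    and orth: "\<forall>i<l. \<forall>j<l. v i \<bullet> v j = (if i = j then 1 else 0)"
    and lam_nz: "\<forall>i<l. lam i \<noteq> 0"
    and roots: "\<forall>i<l. r i ^ (d - 2) = complex_of_real (lam i)"
  shows "real (card (proj_class ` candidate_eigvecs d l v r)) = ((real d - 1) ^ l - 1) / (real d - 2)"
proof -
  define U where "U = {z::complex. z ^ (d - 2) = 1}"
  define S where "S = {I. I \<subseteq> {..<l} \<and> I \<noteq> {}}"
  define P where "P = (SIGMA I:S. PiE {1..card I - 1} (\<lambda>_. U))"
  define F where "F = (\<lambda>(I, eta). VT_mult l v (y_vec r I eta))"
  let ?C = "candidate_eigvecs d l v r"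
  have finU: "finite U" and cardU: "card U = d - 2"
    unfolding U_def using d by (auto intro: finite_roots_unity card_roots_unity_eq)
  have finS: "finite S" unfolding S_def by (rule finite_subset[of _ "Pow {..<l}"]) auto
  have CP: "?C = F ` P"
  proof
    show "?C \<subseteq> F ` P"
    proof
      fix w assume "w \<in> ?C"
      then obtain I eta where w: "w = VT_mult l v (y_vec r I eta)" and I: "I \<subseteq> {..<l}" "I \<noteq> {}"
        and eta: "\<forall>j\<in>{1..card I - 1}. eta j ^ (d - 2) = 1"
        unfolding candidate_eigvecs_def by blast
      have "(I, restrict eta {1..card I - 1}) \<in> P"
        unfolding P_def S_def U_def using I eta by auto
      moreover have "w = F (I, restrict eta {1..card I - 1})"
        using y_vec_restrict[of r I eta] unfolding F_def w by simp
      ultimately show "w \<in> F ` P" by blast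
    qed
  next
    show "F ` P \<subseteq> ?C"
      unfolding P_def F_def S_def U_def candidate_eigvecs_def by (auto simp: PiE_iff) blast
  qed
  have memP: "I \<subseteq> {..<l} \<and> I \<noteq> {} \<and> (\<forall>j\<in>{1..card I - 1}. eta j ^ (d - 2) = 1)
        \<and> eta \<in> extensional {1..card I - 1}" if "(I, eta) \<in> P" for I eta
    using that unfolding P_def S_def U_def by (auto simp: PiE_iff)
  have injF: "inj_on F P"
  proof (rule inj_onI)
    fix x1 x2 assume x1: "x1 \<in> P" and x2: "x2 \<in> P" and eqF: "F x1 = F x2"
    obtain I1 e1 I2 e2 where xx: "x1 = (I1, e1)" "x2 = (I2, e2)" by (cases x1, cases x2) auto
    note m1 = memP[OF x1[unfolded xx]] and m2 = memP[OF x2[unfolded xx]]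
    have yeq: "y_vec r I1 e1 k = y_vec r I2 e2 k" if "k < l" for k
      using comb_zero[OF orth _ that] eqF unfolding xx F_def VT_mult_def by simp
    have II: "I1 = I2"
    proof -
      have "k \<in> I1 \<longleftrightarrow> k \<in> I2" if "k < l" for k
        using y_vec_nz[OF d lam_nz roots, of I1 e1 k] y_vec_nz[OF d lam_nz roots, of I2 e2 k] m1 m2 yeq[OF that] that
        by auto
      then show ?thesis using m1 m2 by blast
    qed
    have fin: "finite I1" using m1 finite_subset by blast
    have ee: "e1 j = e2 j" if j: "j \<in> {1..card I1 - 1}" for j
    proof -
      have p: "j - 1 < card I1" "j - 1 < card I1 - 1" using j by auto
      let ?k = "sorted_list_of_set I1 ! (j - 1)"
      have kI: "?k \<in> I1" using p(1) fin by (metis length_sorted_list_of_set nth_mem set_sorted_list_of_set)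
      then have kl: "?k < l" using m1 by auto
      have "r ?k \<noteq> 0" using r_nz[of d lam ?k r] d lam_nz roots kl by auto
      moreover have "y_vec r I1 e1 ?k = e1 j / r ?k" "y_vec r I1 e2 ?k = e2 j / r ?k"
        using y_vec_in[OF fin p(1), of r e1] y_vec_in[OF fin p(1), of r e2] p j by auto
      ultimately show ?thesis using yeq[OF kl] II by (simp add: field_simps)
    qed
    have ext1: "e1 \<in> extensional {1..card I1 - 1}" using m1 by blast
    have ext2: "e2 \<in> extensional {1..card I1 - 1}" using m2 II by blast
    have "e1 = e2" by (rule extensionalityI[OF ext1 ext2 ee])
    then show "x1 = x2" using xx II by simp
  qed
  have injP: "inj_on proj_class ?C"
  proof (rule inj_onI)
    fix w1 w2 assume w1: "w1 \<in> ?C" and w2: "w2 \<in> ?C" and eq: "proj_class w1 = proj_class w2"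
    have "w1 \<in> proj_class w1" unfolding proj_class_def by (rule CollectI, rule exI[of _ 1]) simp
    then obtain c where c: "c \<noteq> 0" "w1 = c *s w2" using eq unfolding proj_class_def by blast
    obtain I1 e1 where w1': "w1 = VT_mult l v (y_vec r I1 e1)" and I1: "I1 \<subseteq> {..<l}" "I1 \<noteq> {}"
        and e1: "\<forall>j\<in>{1..card I1 - 1}. e1 j ^ (d - 2) = 1"
      using w1 unfolding candidate_eigvecs_def by blast
    obtain I2 e2 where w2': "w2 = VT_mult l v (y_vec r I2 e2)" and I2: "I2 \<subseteq> {..<l}" "I2 \<noteq> {}"
        and e2: "\<forall>j\<in>{1..card I2 - 1}. e2 j ^ (d - 2) = 1"
      using w2 unfolding candidate_eigvecs_def by blast
    have yeq: "y_vec r I1 e1 k = c * y_vec r I2 e2 k" if "k < l" for k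
    proof -
      have "(\<Sum>i<l. y_vec r I1 e1 i *s cvec (v i)) = (\<Sum>i<l. (\<lambda>i. c * y_vec r I2 e2 i) i *s cvec (v i))"
        using c(2) unfolding w1' w2' scale_VT unfolding VT_mult_def by simp
      from comb_zero[OF orth this that] show ?thesis by simp
    qed
    have II: "I1 = I2"
    proof -
      have "k \<in> I1 \<longleftrightarrow> k \<in> I2" if "k < l" for k
        using y_vec_nz[OF d lam_nz roots I1 e1 that] y_vec_nz[OF d lam_nz roots I2 e2 that] yeq[OF that] c(1)
        by auto
      then show ?thesis using I1 I2 by blast
    qed
    have fin: "finite I1" using I1 finite_subset by blast
    define m where "m = sorted_list_of_set I1 ! (card I1 - 1)"
    have mI: "m \<in> I1" using y_vec_last(1)[OF fin I1(2)] unfolding m_def .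
    have "r m \<noteq> 0" using r_nz[of d lam m r] d lam_nz roots mI I1 by auto
    moreover have "y_vec r I1 e1 m = 1 / r m" "y_vec r I1 e2 m = 1 / r m"
      using y_vec_last(2)[OF fin I1(2)] unfolding m_def by auto
    ultimately have "c = 1" using yeq[of m] mI I1 II by (auto simp: field_simps)
    then show "w1 = w2" using c by simp
  qed
  have finP: "finite P" unfolding P_def using finS finU by (auto intro!: finite_PiE)
  have "card (proj_class ` ?C) = card ?C" by (rule card_image[OF injP])
  also have "\<dots> = card P" unfolding CP by (rule card_image[OF injF])
  also have "\<dots> = (\<Sum>I\<in>S. (d - 2) ^ (card I - 1))"
    unfolding P_def using finS finU cardU by (simp add: card_PiE finite_PiE)
  finally have cardeq: "card (proj_class ` ?C) = (\<Sum>I\<in>S. (d - 2) ^ (card I - 1))" .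
  define N where "N = card (proj_class ` ?C)"
  have dd: "d - 2 + 1 = d - 1" using d by simp
  have key: "(d - 2) * N = (d - 1) ^ l - 1"
    unfolding N_def cardeq S_def using count_subsets[of "d - 2" l, unfolded dd] d by simp
  have pos: "(d - 1) ^ l \<ge> 1" using d by simp
  have "real ((d - 2) * N) = real ((d - 1) ^ l) - 1"
    using key pos by (simp add: of_nat_diff)
  then have "(real d - 2) * real N = (real d - 1) ^ l - 1"
    using d by (simp add: of_nat_diff)
  moreover have "real d - 2 \<noteq> 0" using d by simp
  ultimately have "real N = ((real d - 1) ^ l - 1) / (real d - 2)" by (simp add: field_simps)
  then show ?thesis unfolding N_def .
qed

theorem theorem2p3:
  fixes v :: "nat \<Rightarrow> real^'n" and lam :: "nat \<Rightarrow> real" and r :: "nat \<Rightarrow> complex"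
    and d l :: nat
  assumes d: "d \<ge> 3"
    and l: "1 \<le> l" "l \<le> CARD('n)"
    and orth: "\<forall>i<l. \<forall>j<l. v i \<bullet> v j = (if i = j then 1 else 0)"
    and lam_nz: "\<forall>i<l. lam i \<noteq> 0"
    and roots: "\<forall>i<l. r i ^ (d - 2) = complex_of_real (lam i)"
  shows "(\<forall>w\<in>candidate_eigvecs d l v r.
            is_eigenvector d (\<lambda>xs. complex_of_real (odeco_tensor l lam v xs)) w)
       \<and> real (card (proj_class ` candidate_eigvecs d l v r))
            = ((real d - 1) ^ l - 1) / (real d - 2)
       \<and> (\<forall>w. is_eigenvector d (\<lambda>xs. complex_of_real (odeco_tensor l lam v xs)) w \<longrightarrow>
            (\<exists>w0\<in>candidate_eigvecs d l v r. w \<in> proj_class w0)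
            \<or> (w \<noteq> 0 \<and> in_nullspace_V l v w))
       \<and> (\<forall>w. w \<noteq> 0 \<and> in_nullspace_V l v w \<longrightarrow>
            is_eigenvector d (\<lambda>xs. complex_of_real (odeco_tensor l lam v xs)) w)"
  using part1[OF d orth lam_nz roots] part2[OF d orth lam_nz roots]
    part3[OF d orth lam_nz roots] part4[OF d] by blast

end
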